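(* Any degree-three IQP circuit $H^{\otimes n}D_{IQP3}H^{\otimes n}$ on $n$ qubits whose diagonal part $D_{IQP3}$ consists of $d$ layers of $Z$, $CZ$ and $CCZ$ gates can be compiled, after appending $O(nd)$ ancilla qubits initialized to $|0\rangle$ (and returned to $|0\rangle$), into an equivalent circuit consisting of Clifford gates and a single layer of gates $T^{\pm1}$.
   Context: A degree-three IQP circuit has the form $H^{\otimes n}D_{IQP3}H^{\otimes n}$ where $D_{IQP3}$ is a product of $Z$, $CZ$ and $CCZ$ gates. $T=\mathrm{diag}(1,e^{i\pi/4})$. A single layer means the $T^{\pm1}$ gates act in parallel on distinct qubits. The Clifford group is generated by $H$, $S=\mathrm{diag}(1,i)$ and CNOT. *)

theory Defs
  imports Complex_Main
begin

text \<open>Qubits are numbered 0,1,2,...; a computational basis state of N qubits is a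
  bool list of length N (entry i = value of qubit i). An operator on N qubits is given
  by its matrix entries, a function from (row basis state, column basis state) to complex.\<close>

datatype gate =
    H nat | S nat | CNOT nat nat | T nat | Tdg nat
  | Z nat | CZ nat nat | CCZ nat nat nat

fun gate_qubits :: "gate \<Rightarrow> nat list" where
  "gate_qubits (H i) = [i]"
| "gate_qubits (S i) = [i]"
| "gate_qubits (CNOT c t) = [c, t]"
| "gate_qubits (T i) = [i]"
| "gate_qubits (Tdg i) = [i]"
| "gate_qubits (Z i) = [i]"
| "gate_qubits (CZ i j) = [i, j]"
| "gate_qubits (CCZ i j k) = [i, j, k]"

definition bits :: "nat \<Rightarrow> bool list set" where
  "bits N = {x. length x = N}"

fun gate_mat :: "gate \<Rightarrow> bool list \<Rightarrow> bool list \<Rightarrow> complex" where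
  "gate_mat (H i) x y =
     (if x[i := False] = y[i := False]
      then (if x ! i \<and> y ! i then -1 else 1) / complex_of_real (sqrt 2) else 0)"
| "gate_mat (S i) x y = (if x = y then (if x ! i then \<i> else 1) else 0)"
| "gate_mat (CNOT c t) x y = (if x = y[t := (y ! t \<noteq> y ! c)] then 1 else 0)"
| "gate_mat (T i) x y = (if x = y then (if x ! i then exp (\<i> * complex_of_real (pi / 4)) else 1) else 0)"
| "gate_mat (Tdg i) x y = (if x = y then (if x ! i then exp (- \<i> * complex_of_real (pi / 4)) else 1) else 0)"
| "gate_mat (Z i) x y = (if x = y then (if x ! i then -1 else 1) else 0)"
| "gate_mat (CZ i j) x y = (if x = y then (if x ! i \<and> x ! j then -1 else 1) else 0)"
| "gate_mat (CCZ i j k) x y = (if x = y then (if x ! i \<and> x ! j \<and> x ! k then -1 else 1) else 0)"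

text \<open>Matrix of a circuit on N qubits; the list is in time order (first gate applied first).\<close>
fun circ_mat :: "nat \<Rightarrow> gate list \<Rightarrow> bool list \<Rightarrow> bool list \<Rightarrow> complex" where
  "circ_mat N [] x z = (if x = z then 1 else 0)"
| "circ_mat N (g # gs) x z = (\<Sum>y\<in>bits N. circ_mat N gs x y * gate_mat g y z)"

definition wf_gate :: "nat \<Rightarrow> gate \<Rightarrow> bool" where
  "wf_gate N g \<longleftrightarrow> distinct (gate_qubits g) \<and> (\<forall>q\<in>set (gate_qubits g). q < N)"

definition is_layer :: "nat \<Rightarrow> gate list \<Rightarrow> bool" where
  "is_layer N L \<longleftrightarrow> (\<forall>g\<in>set L. wf_gate N g) \<and> distinct (concat (map gate_qubits L))"

fun is_diag3_gate :: "gate \<Rightarrow> bool" where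
  "is_diag3_gate (Z _) = True"
| "is_diag3_gate (CZ _ _) = True"
| "is_diag3_gate (CCZ _ _ _) = True"
| "is_diag3_gate _ = False"

fun is_clifford_gate :: "gate \<Rightarrow> bool" where
  "is_clifford_gate (H _) = True"
| "is_clifford_gate (S _) = True"
| "is_clifford_gate (CNOT _ _) = True"
| "is_clifford_gate _ = False"

fun is_T_gate :: "gate \<Rightarrow> bool" where
  "is_T_gate (T _) = True"
| "is_T_gate (Tdg _) = True"
| "is_T_gate _ = False"

definition hadamard_all :: "nat \<Rightarrow> gate list" where
  "hadamard_all n = map H [0..<n]"

definition iqp3_circuit :: "nat \<Rightarrow> gate list list \<Rightarrow> gate list" where
  "iqp3_circuit n layers = hadamard_all n @ concat layers @ hadamard_all n"

end

theory Submission
  imports Defs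
begin

fun isH :: "gate \<Rightarrow> bool" where "isH (H _) = True" | "isH _ = False"

fun cfun :: "gate \<Rightarrow> bool list \<Rightarrow> bool list" where
  "cfun (CNOT c t) z = z[t := (z ! t \<noteq> z ! c)]"
| "cfun _ z = z"

fun cph :: "gate \<Rightarrow> bool list \<Rightarrow> complex" where
  "cph (S i) z = (if z ! i then \<i> else 1)"
| "cph (T i) z = (if z ! i then exp (\<i> * complex_of_real (pi / 4)) else 1)"
| "cph (Tdg i) z = (if z ! i then exp (- \<i> * complex_of_real (pi / 4)) else 1)"
| "cph (Z i) z = (if z ! i then -1 else 1)"
| "cph (CZ i j) z = (if z ! i \<and> z ! j then -1 else 1)"
| "cph (CCZ i j k) z = (if z ! i \<and> z ! j \<and> z ! k then -1 else 1)"
| "cph _ z = 1"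

lemma gate_classical: "\<not> isH g \<Longrightarrow> gate_mat g y z = (if y = cfun g z then cph g z else 0)"
  by (cases g) auto

fun run :: "gate list \<Rightarrow> bool list \<Rightarrow> bool list" where
  "run [] z = z" | "run (g # gs) z = run gs (cfun g z)"
fun phr :: "gate list \<Rightarrow> bool list \<Rightarrow> complex" where
  "phr [] z = 1" | "phr (g # gs) z = cph g z * phr gs (cfun g z)"

lemma run_append: "run (xs @ ys) z = run ys (run xs z)" by (induction xs arbitrary: z) auto
lemma phr_append: "phr (xs @ ys) z = phr xs z * phr ys (run xs z)"
  by (induction xs arbitrary: z) (auto simp: mult.assoc)
lemma length_cfun[simp]: "length (cfun g z) = length z" by (cases g) auto
lemma length_run[simp]: "length (run gs z) = length z" by (induction gs arbitrary: z) auto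

lemma finite_bits[simp]: "finite (bits N)"
  unfolding bits_def using finite_lists_length_eq[of "UNIV::bool set" N] by simp

lemma circ_classical:
  assumes "\<forall>g\<in>set gs. \<not> isH g" "z \<in> bits N"
  shows "circ_mat N gs x z = (if x = run gs z then phr gs z else 0)"
  using assms
proof (induction gs arbitrary: z)
  case Nil then show ?case by simp
next
  case (Cons g gs)
  have g: "\<not> isH g" using Cons.prems by simp
  have cz: "cfun g z \<in> bits N" using Cons.prems(2) by (simp add: bits_def)
  have "circ_mat N (g # gs) x z = (\<Sum>y\<in>bits N. if y = cfun g z then circ_mat N gs x y * cph g z else 0)"
    unfolding circ_mat.simps gate_classical[OF g] by (rule sum.cong) auto
  also have "... = circ_mat N gs x (cfun g z) * cph g z" using cz by (simp add: sum.delta)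
  also have "... = (if x = run (g#gs) z then phr (g#gs) z else 0)"
    using Cons.IH[of "cfun g z"] Cons.prems cz by simp
  finally show ?case .
qed

lemma run_id: "\<forall>g\<in>set gs. \<forall>z. cfun g z = z \<Longrightarrow> run gs z = z"
  by (induction gs) auto
lemma phr_id: "\<forall>g\<in>set gs. \<forall>z. cfun g z = z \<Longrightarrow> phr gs z = prod_list (map (\<lambda>g. cph g z) gs)"
  by (induction gs) auto
lemma phr_cnot: "\<forall>g\<in>set gs. \<exists>c t. g = CNOT c t \<Longrightarrow> phr gs z = 1"
  by (induction gs arbitrary: z) auto

definition par :: "bool list \<Rightarrow> nat list \<Rightarrow> bool" where
  "par z cs = foldr (\<lambda>c b. z ! c \<noteq> b) cs False"
lemma par_Nil[simp]: "par z [] = False" by (simp add: par_def)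
lemma par_Cons[simp]: "par z (c#cs) = (z!c \<noteq> par z cs)" by (simp add: par_def)
lemma par_upd: "t \<notin> set cs \<Longrightarrow> par (z[t := b]) cs = par z cs" by (induction cs) auto
lemma par_append: "\<forall>c\<in>set cs. c < length v \<Longrightarrow> par (v @ w) cs = par v cs"
  by (induction cs) (auto simp: nth_append)

lemma run_cnots: "t \<notin> set cs \<Longrightarrow> t < length z \<Longrightarrow>
   run (map (\<lambda>c. CNOT c t) cs) z = z[t := (z!t \<noteq> par z cs)]"
proof (induction cs arbitrary: z)
  case Nil then show ?case by simp
next
  case (Cons c cs)
  have ct: "c \<noteq> t" using Cons.prems by auto
  have "run (map (\<lambda>c. CNOT c t) (c#cs)) z = run (map (\<lambda>c. CNOT c t) cs) (z[t := (z!t \<noteq> z!c)])"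
    by simp
  also have "... = (z[t := (z!t \<noteq> z!c)])[t := ((z!t \<noteq> z!c) \<noteq> par z cs)]"
    using Cons by (simp add: par_upd)
  also have "... = z[t := (z!t \<noteq> (z!c \<noteq> par z cs))]" by (cases "z!t"; cases "z!c"; cases "par z cs") simp_all
  finally show ?case by simp
qed

definition xr :: "nat \<Rightarrow> (nat \<Rightarrow> nat list) \<Rightarrow> nat list \<Rightarrow> bool list \<Rightarrow> bool list" where
 "xr n cs ks z = map (\<lambda>i. if n \<le> i \<and> i - n \<in> set ks then z!i \<noteq> par z (cs (i-n)) else z!i) [0..<length z]"

lemma run_comp:
  assumes "distinct ks" "\<forall>k\<in>set ks. n + k < length z" "\<forall>k\<in>set ks. \<forall>c\<in>set (cs k). c < n"
  shows "run (concat (map (\<lambda>k. map (\<lambda>c. CNOT c (n+k)) (cs k)) ks)) z = xr n cs ks z"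
  using assms
proof (induction ks arbitrary: z)
  case Nil then show ?case by (simp add: xr_def map_nth)
next
  case (Cons k ks)
  define z1 where "z1 = z[n+k := (z!(n+k) \<noteq> par z (cs k))]"
  have nk: "n + k \<notin> set (cs k)" using Cons.prems(3) by auto
  have r1: "run (map (\<lambda>c. CNOT c (n+k)) (cs k)) z = z1"
    unfolding z1_def using run_cnots[OF nk] Cons.prems(2) by simp
  have "run (concat (map (\<lambda>k. map (\<lambda>c. CNOT c (n+k)) (cs k)) (k#ks))) z = xr n cs ks z1"
    using Cons.IH[of z1] Cons.prems r1 by (simp add: run_append z1_def)
  also have "... = xr n cs (k#ks) z"
  proof (rule nth_equalityI)
    show "length (xr n cs ks z1) = length (xr n cs (k # ks) z)" by (simp add: xr_def z1_def)
  next
    fix i assume "i < length (xr n cs ks z1)"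
    then have i: "i < length z" by (simp add: xr_def z1_def)
    show "xr n cs ks z1 ! i = xr n cs (k # ks) z ! i"
    proof (cases "i = n + k")
      case True
      then have "k \<notin> set ks" using Cons.prems(1) by simp
      then show ?thesis using True i by (simp add: xr_def z1_def)
    next
      case False
      have "par z1 (cs (i-n)) = par z (cs (i-n))" if "i - n \<in> set ks" "n \<le> i"
        unfolding z1_def using that Cons.prems(3) by (intro par_upd) auto
      then show ?thesis using False i by (auto simp: xr_def z1_def)
    qed
  qed
  finally show ?case .
qed

lemma xr_app:
  assumes "length v = n" "length w = m" "\<forall>k<m. \<forall>c\<in>set (cs k). c < n"
  shows "xr n cs [0..<m] (v @ w) = v @ map (\<lambda>k. w!k \<noteq> par v (cs k)) [0..<m]"
proof (rule nth_equalityI)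
  show "length (xr n cs [0..<m] (v @ w)) = length (v @ map (\<lambda>k. w!k \<noteq> par v (cs k)) [0..<m])"
    using assms by (simp add: xr_def)
next
  fix i assume "i < length (xr n cs [0..<m] (v @ w))"
  then have i: "i < n + m" using assms by (simp add: xr_def)
  show "xr n cs [0..<m] (v @ w) ! i = (v @ map (\<lambda>k. w!k \<noteq> par v (cs k)) [0..<m]) ! i"
  proof (cases "i < n")
    case True then show ?thesis using assms i by (simp add: xr_def nth_append)
  next
    case False
    then have "i - n < m" using i by simp
    then have "par (v @ w) (cs (i-n)) = par v (cs (i-n))" using assms by (intro par_append) auto
    then show ?thesis using False assms i \<open>i - n < m\<close> by (simp add: xr_def nth_append)
  qed
qed


lemma circ_append:
  assumes "z \<in> bits N"
  shows "circ_mat N (gs @ hs) x z = (\<Sum>y\<in>bits N. circ_mat N hs x y * circ_mat N gs y z)"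
  using assms
proof (induction gs arbitrary: z)
  case Nil
  have "(\<Sum>y\<in>bits N. circ_mat N hs x y * circ_mat N [] y z) = (\<Sum>y\<in>bits N. if y = z then circ_mat N hs x y else 0)"
    by (rule sum.cong) auto
  then show ?case using Nil by (simp add: sum.delta')
next
  case (Cons g gs)
  have "circ_mat N ((g # gs) @ hs) x z = (\<Sum>y\<in>bits N. (\<Sum>q\<in>bits N. circ_mat N hs x q * circ_mat N gs q y) * gate_mat g y z)"
    using Cons.IH by simp
  also have "... = (\<Sum>y\<in>bits N. \<Sum>q\<in>bits N. circ_mat N hs x q * (circ_mat N gs q y * gate_mat g y z))"
    by (simp add: sum_distrib_right mult.assoc)
  also have "... = (\<Sum>q\<in>bits N. \<Sum>y\<in>bits N. circ_mat N hs x q * (circ_mat N gs q y * gate_mat g y z))"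
    by (rule sum.swap)
  also have "... = (\<Sum>q\<in>bits N. circ_mat N hs x q * circ_mat N (g # gs) q z)"
    by (simp add: sum_distrib_left)
  finally show ?case .
qed

lemma bits_inj: "inj_on (\<lambda>(a,b). a @ b) (bits n \<times> bits m)"
proof (rule inj_onI)
  fix x y assume x: "x \<in> bits n \<times> bits m" and y: "y \<in> bits n \<times> bits m"
     and e: "(\<lambda>(a,b). a @ b) x = (\<lambda>(a,b). a @ b) y"
  obtain a b where ab: "x = (a,b)" by (cases x)
  obtain c d where cd: "y = (c,d)" by (cases y)
  have l: "length a = length c" using x y ab cd by (simp add: bits_def)
  have "a @ b = c @ d" using e ab cd by simp
  then have "a = c \<and> b = d" using l by simp
  then show "x = y" using ab cd by simp
qed

lemma bits_split: "(\<Sum>q\<in>bits (n+m). f q) = (\<Sum>a\<in>bits n. \<Sum>b\<in>bits m. f (a @ b))"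
proof -
  have img: "bits (n+m) = (\<lambda>(a,b). a @ b) ` (bits n \<times> bits m)"
  proof
    show "bits (n+m) \<subseteq> (\<lambda>(a,b). a @ b) ` (bits n \<times> bits m)"
    proof
      fix q assume q: "q \<in> bits (n+m)"
      have "(take n q, drop n q) \<in> bits n \<times> bits m" using q by (simp add: bits_def)
      moreover have "q = (\<lambda>(a,b). a @ b) (take n q, drop n q)" by simp
      ultimately show "q \<in> (\<lambda>(a,b). a @ b) ` (bits n \<times> bits m)" by (rule rev_image_eqI)
    qed
  next
    show "(\<lambda>(a,b). a @ b) ` (bits n \<times> bits m) \<subseteq> bits (n+m)" by (auto simp: bits_def)
  qed
  have inj: "inj_on (\<lambda>(a,b). a @ b) (bits n \<times> bits m)"
    by (rule bits_inj)
  have "(\<Sum>q\<in>bits (n+m). f q) = (\<Sum>x\<in>bits n \<times> bits m. f ((\<lambda>(a,b). a @ b) x))"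
    unfolding img by (rule sum.reindex[OF inj, unfolded o_def])
  also have "... = (\<Sum>a\<in>bits n. \<Sum>b\<in>bits m. f (a @ b))"
    by (simp add: sum.cartesian_product split_def)
  finally show ?thesis .
qed

lemma H_tensor: "i < n \<Longrightarrow> a \<in> bits n \<Longrightarrow> c \<in> bits n \<Longrightarrow> b \<in> bits m \<Longrightarrow> d \<in> bits m \<Longrightarrow>
  gate_mat (H i) (a @ b) (c @ d) = gate_mat (H i) a c * (if b = d then 1 else 0)"
  by (auto simp: bits_def list_update_append nth_append)

lemma Hs_tensor:
  assumes "\<forall>g\<in>set gs. \<exists>i<n. g = H i" "a \<in> bits n" "c \<in> bits n" "b \<in> bits m" "d \<in> bits m"
  shows "circ_mat (n+m) gs (a @ b) (c @ d) = circ_mat n gs a c * (if b = d then 1 else 0)"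
  using assms
proof (induction gs arbitrary: c d)
  case Nil then show ?case by (auto simp: bits_def)
next
  case (Cons g gs)
  obtain i where i: "i < n" "g = H i" using Cons.prems by auto
  have "circ_mat (n+m) (g # gs) (a @ b) (c @ d) =
     (\<Sum>a'\<in>bits n. \<Sum>b'\<in>bits m. circ_mat (n+m) gs (a @ b) (a' @ b') * gate_mat g (a' @ b') (c @ d))"
    by (simp add: bits_split)
  also have "... = (\<Sum>a'\<in>bits n. \<Sum>b'\<in>bits m. (circ_mat n gs a a' * (if b = b' then 1 else 0)) *
       (gate_mat g a' c * (if b' = d then 1 else 0)))"
    using Cons i by (intro sum.cong refl) (simp add: H_tensor del: gate_mat.simps)
  also have "... = (\<Sum>a'\<in>bits n. \<Sum>b'\<in>bits m. if b = b' then circ_mat n gs a a' * gate_mat g a' c * (if b = d then 1 else 0) else 0)"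
    by (intro sum.cong refl) (auto simp del: gate_mat.simps)
  also have "... = (\<Sum>a'\<in>bits n. circ_mat n gs a a' * gate_mat g a' c * (if b = d then 1 else 0))"
    using Cons.prems by (simp add: sum.delta)
  also have "... = circ_mat n (g # gs) a c * (if b = d then 1 else 0)"
    by (simp add: sum_distrib_right)
  finally show ?case .
qed

lemma sandwich:
  assumes Hs: "\<forall>g\<in>set Hs. \<exists>i<n. g = H i"
  and mid: "\<forall>a\<in>bits n. \<forall>b\<in>bits m. \<forall>c\<in>bits n. circ_mat (n+m) M (a @ b) (c @ replicate m False) =
              (if b = replicate m False then circ_mat n D a c else 0)"
  and x: "x \<in> bits n" and z: "z \<in> bits n" and y: "y \<in> bits m"
  shows "circ_mat (n+m) (Hs @ M @ Hs) (x @ y) (z @ replicate m False) =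
         (if y = replicate m False then circ_mat n (Hs @ D @ Hs) x z else 0)"
proof -
  define Oz where "Oz = replicate m False"
  have Oz: "Oz \<in> bits m" by (simp add: Oz_def bits_def)
  have zO: "z @ Oz \<in> bits (n+m)" using z Oz by (simp add: bits_def)
  have inner: "circ_mat (n+m) (M @ Hs) (x @ y) (c @ Oz) = (if y = Oz then circ_mat n (D @ Hs) x c else 0)"
    if c: "c \<in> bits n" for c
  proof -
    have cO: "c @ Oz \<in> bits (n+m)" using c Oz by (simp add: bits_def)
    have "circ_mat (n+m) (M @ Hs) (x @ y) (c @ Oz) =
       (\<Sum>a\<in>bits n. \<Sum>b\<in>bits m. circ_mat (n+m) Hs (x @ y) (a @ b) * circ_mat (n+m) M (a @ b) (c @ Oz))"
      by (simp add: circ_append[OF cO] bits_split)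
    also have "... = (\<Sum>a\<in>bits n. \<Sum>b\<in>bits m. if y = b then circ_mat n Hs x a * circ_mat (n+m) M (a @ b) (c @ Oz) else 0)"
      using Hs x y by (intro sum.cong refl) (simp add: Hs_tensor)
    also have "... = (\<Sum>a\<in>bits n. circ_mat n Hs x a * circ_mat (n+m) M (a @ y) (c @ Oz))"
      using y by (simp add: sum.delta)
    also have "... = (\<Sum>a\<in>bits n. if y = Oz then circ_mat n Hs x a * circ_mat n D a c else 0)"
      using mid y c unfolding Oz_def by (intro sum.cong refl) simp
    also have "... = (if y = Oz then circ_mat n (D @ Hs) x c else 0)"
      by (simp add: circ_append[OF c])
    finally show ?thesis .
  qed
  have "circ_mat (n+m) (Hs @ M @ Hs) (x @ y) (z @ Oz) =
     (\<Sum>c\<in>bits n. \<Sum>d\<in>bits m. circ_mat (n+m) (M @ Hs) (x @ y) (c @ d) * circ_mat (n+m) Hs (c @ d) (z @ Oz))"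
    by (simp add: circ_append[OF zO] bits_split)
  also have "... = (\<Sum>c\<in>bits n. \<Sum>d\<in>bits m. if d = Oz then circ_mat (n+m) (M @ Hs) (x @ y) (c @ d) * circ_mat n Hs c z else 0)"
    using Hs z Oz by (intro sum.cong refl) (simp add: Hs_tensor)
  also have "... = (\<Sum>c\<in>bits n. circ_mat (n+m) (M @ Hs) (x @ y) (c @ Oz) * circ_mat n Hs c z)"
    using Oz by (simp add: sum.delta)
  also have "... = (\<Sum>c\<in>bits n. if y = Oz then circ_mat n (D @ Hs) x c * circ_mat n Hs c z else 0)"
    using inner by (intro sum.cong refl) simp
  also have "... = (if y = Oz then circ_mat n (Hs @ D @ Hs) x z else 0)"
    by (simp add: circ_append[OF z])
  finally show ?thesis unfolding Oz_def .
qed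


definition w8 :: complex where "w8 = exp (\<i> * complex_of_real (pi / 4))"
definition ex :: "bool \<Rightarrow> bool \<Rightarrow> nat" where "ex p b = (if b then (if p then 1 else 7) else 0)"

lemma w8_pow: "w8 ^ N = exp (of_nat N * (\<i> * complex_of_real (pi / 4)))"
  unfolding w8_def by (rule exp_of_nat_mult[symmetric])

lemma w8_4: "w8 ^ 4 = -1"
proof -
  have "(of_nat 4 :: complex) * (\<i> * complex_of_real (pi / 4)) = \<i> * of_real pi"
    by (simp add: of_real_divide)
  then show ?thesis by (simp only: w8_pow) simp
qed

lemma w8_8: "w8 ^ 8 = 1"
proof -
  have "w8 ^ 8 = (w8 ^ 4) ^ 2" by (simp flip: power_mult)
  then show ?thesis by (simp add: w8_4)
qed

lemma w8_7: "exp (- \<i> * complex_of_real (pi / 4)) = w8 ^ 7"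
proof -
  have e: "exp (- \<i> * complex_of_real (pi / 4)) * w8 = 1"
    unfolding w8_def by (simp flip: exp_add)
  have "w8 ^ 7 = w8 ^ 7 * (exp (- \<i> * complex_of_real (pi / 4)) * w8)" using e by simp
  also have "... = exp (- \<i> * complex_of_real (pi / 4)) * (w8 ^ 7 * w8 ^ 1)"
    by (simp only: mult_ac power_one_right)
  also have "... = exp (- \<i> * complex_of_real (pi / 4)) * w8 ^ 8"
    by (simp only: power_add[symmetric]) simp
  finally show ?thesis by (simp add: w8_8)
qed

lemma w8_mod0[simp]: "N mod 8 = 0 \<Longrightarrow> w8 ^ N = 1"
proof -
  assume "N mod 8 = 0"
  then have "N = 8 * (N div 8)" by auto
  then have "w8 ^ N = (w8 ^ 8) ^ (N div 8)" by (metis power_mult)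
  then show ?thesis by (simp add: w8_8)
qed

lemma w8_mod4[simp]: "N mod 8 = 4 \<Longrightarrow> w8 ^ N = -1"
proof -
  assume "N mod 8 = 4"
  then have "N = 8 * (N div 8) + 4" by presburger
  then have "w8 ^ N = (w8 ^ 8) ^ (N div 8) * w8 ^ 4" by (metis power_mult power_add)
  then show ?thesis by (simp add: w8_8 w8_4)
qed

lemma prod_w8: "prod_list (map (\<lambda>x. w8 ^ f x) xs) = w8 ^ sum_list (map f xs)"
  by (induction xs) (auto simp: power_add)

fun gate_anc :: "gate \<Rightarrow> (nat list \<times> bool) list" where
  "gate_anc (Z i) = [([i],True),([i],True),([i],True),([i],True)]"
| "gate_anc (CZ i j) = [([i],True),([i],True),([j],True),([j],True),([i,j],False),([i,j],False)]"
| "gate_anc (CCZ i j k) = [([i],True),([j],True),([k],True),([i,j],False),([i,k],False),([j,k],False),([i,j,k],True)]"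
| "gate_anc _ = []"

lemma gate_anc_len: "length (gate_anc g) \<le> 7" by (cases g) auto

lemma gate_anc_sub: "x \<in> set (gate_anc g) \<Longrightarrow> set (fst x) \<subseteq> set (gate_qubits g)"
  by (cases g) auto

lemma gate_anc_phase:
  assumes "is_diag3_gate g"
  shows "prod_list (map (\<lambda>x. w8 ^ ex (snd x) (par v (fst x))) (gate_anc g)) = cph g v"
proof -
  have "prod_list (map (\<lambda>x. w8 ^ ex (snd x) (par v (fst x))) (gate_anc g)) =
        w8 ^ sum_list (map (\<lambda>x. ex (snd x) (par v (fst x))) (gate_anc g))"
    by (rule prod_w8)
  also have "... = cph g v"
  proof -
    define s where "s = sum_list (map (\<lambda>x. ex (snd x) (par v (fst x))) (gate_anc g))"
    have "(s mod 8 = 4 \<and> cph g v = -1) \<or> (s mod 8 = 0 \<and> cph g v = 1)"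
      using assms unfolding s_def
      by (cases g) (auto simp: ex_def)
    then show ?thesis unfolding s_def[symmetric] by auto
  qed
  finally show ?thesis .
qed

lemma T_ph: "cph (T q) z = (if z!q then w8 else 1)" by (simp only: cph.simps w8_def)
lemma Tdg_ph: "cph (Tdg q) z = (if z!q then w8^7 else 1)" by (simp only: cph.simps w8_7)
lemma cph_Tsel: "cph (if p then T q else Tdg q) z = w8 ^ ex p (z ! q)"
  by (simp add: T_ph Tdg_ph ex_def del: cph.simps)

lemma prod_list_concat: "prod_list (concat xss) = prod_list (map prod_list xss)"
  by (induction xss) auto


lemma len_layer: "length L \<le> length (concat (map gate_qubits L))"
proof (induction L)
  case (Cons g L)
  have "gate_qubits g \<noteq> []" by (cases g) auto
  then show ?case using Cons by (cases "gate_qubits g") auto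
qed simp

lemma layer_len: "is_layer n L \<Longrightarrow> length L \<le> n"
proof -
  assume l: "is_layer n L"
  let ?q = "concat (map gate_qubits L)"
  have "distinct ?q" using l by (simp add: is_layer_def)
  then have "length ?q = card (set ?q)" by (metis distinct_card)
  also have "set ?q \<subseteq> {..<n}" using l by (auto simp: is_layer_def wf_gate_def)
  then have "card (set ?q) \<le> n" using card_mono[of "{..<n}" "set ?q"] by simp
  finally show ?thesis using len_layer[of L] by simp
qed

lemma len_concat_bound: "\<forall>L\<in>set layers. length L \<le> n \<Longrightarrow> length (concat layers) \<le> length layers * n"
  by (induction layers) auto

lemma len_anc_bound: "length (concat (map gate_anc gs)) \<le> 7 * length gs"
proof (induction gs)
  case (Cons g gs)
  then show ?case using gate_anc_len[of g] by simp
qed simp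

lemma map_T_eq: "prod_list (map (\<lambda>k. f (xs ! k)) [0..<length xs]) = prod_list (map f xs)"
proof -
  have "map (\<lambda>k. f (xs ! k)) [0..<length xs] = map f (map (\<lambda>k. xs ! k) [0..<length xs])" by simp
  then show ?thesis by (simp only: map_nth)
qed

lemma diag_notH: "is_diag3_gate g \<Longrightarrow> \<not> isH g" by (cases g) auto
lemma diag_cfun: "is_diag3_gate g \<Longrightarrow> cfun g z = z" by (cases g) auto
lemma T_notH: "is_T_gate g \<Longrightarrow> \<not> isH g" by (cases g) auto

theorem lemma3:
  shows "\<exists>K::nat. \<forall>(n::nat) (d::nat) (layers::gate list list).
     length layers = d \<and> (\<forall>L\<in>set layers. is_layer n L \<and> (\<forall>g\<in>set L. is_diag3_gate g)) \<longrightarrow>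
     (\<exists>(m::nat) C1 Tl C2.
        m \<le> K * n * d \<and>
        (\<forall>g\<in>set (C1 @ C2). is_clifford_gate g \<and> wf_gate (n + m) g) \<and>
        is_layer (n + m) Tl \<and> (\<forall>g\<in>set Tl. is_T_gate g) \<and>
        (\<forall>x\<in>bits n. \<forall>z\<in>bits n. \<forall>y\<in>bits m.
           circ_mat (n + m) (C1 @ Tl @ C2) (x @ y) (z @ replicate m False) =
           (if y = replicate m False then circ_mat n (iqp3_circuit n layers) x z else 0)))"
proof (rule exI[of _ 7], intro allI impI)
  fix n d :: nat and layers :: "gate list list"
  assume A: "length layers = d \<and> (\<forall>L\<in>set layers. is_layer n L \<and> (\<forall>g\<in>set L. is_diag3_gate g))"
  define gates where "gates = concat layers"
  define srcs where "srcs = concat (map gate_anc gates)"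
  define m where "m = length srcs"
  define cs where "cs = (\<lambda>k. fst (srcs ! k))"
  define Comp where "Comp = concat (map (\<lambda>k. map (\<lambda>c. CNOT c (n+k)) (cs k)) [0..<m])"
  define Tl where "Tl = map (\<lambda>k. if snd (srcs ! k) then T (n+k) else Tdg (n+k)) [0..<m]"
  define Hn where "Hn = hadamard_all n"
  define Oz where "Oz = replicate m False"
  have gd: "\<forall>g\<in>set gates. is_diag3_gate g \<and> wf_gate n g"
    using A by (auto simp: gates_def is_layer_def)
  have csb: "\<forall>k<m. \<forall>c\<in>set (cs k). c < n"
  proof (intro allI impI ballI)
    fix k c assume k: "k < m" and c: "c \<in> set (cs k)"
    have "srcs ! k \<in> set srcs" using k by (simp add: m_def)
    then obtain g where g: "g \<in> set gates" "srcs ! k \<in> set (gate_anc g)" by (auto simp: srcs_def)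
    have "c \<in> set (gate_qubits g)" using gate_anc_sub[OF g(2)] c by (auto simp: cs_def)
    then show "c < n" using gd g(1) by (auto simp: wf_gate_def)
  qed
  have mb: "m \<le> 7 * n * d"
  proof -
    have "length gates \<le> d * n" using A len_concat_bound[of layers n] layer_len
      by (auto simp: gates_def)
    then have "7 * length gates \<le> 7 * n * d" by (simp add: mult_ac)
    then show ?thesis using len_anc_bound[of gates] by (simp add: m_def srcs_def)
  qed
  have HnH: "\<forall>g\<in>set Hn. \<exists>i<n. g = H i" by (auto simp: Hn_def hadamard_all_def)
  have TlT: "\<forall>g\<in>set Tl. is_T_gate g" by (auto simp: Tl_def)
  have Tlid: "\<forall>g\<in>set Tl. \<forall>z. cfun g z = z" by (auto simp: Tl_def)
  have CompC: "\<forall>g\<in>set Comp. \<exists>c t. g = CNOT c t" by (auto simp: Comp_def)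
  have cliff: "\<forall>g\<in>set ((Hn @ Comp) @ (Comp @ Hn)). is_clifford_gate g \<and> wf_gate (n + m) g"
  proof
    fix g assume "g \<in> set ((Hn @ Comp) @ (Comp @ Hn))"
    then have "g \<in> set Hn \<or> g \<in> set Comp" by auto
    then show "is_clifford_gate g \<and> wf_gate (n + m) g"
    proof
      assume "g \<in> set Hn" then show ?thesis by (auto simp: Hn_def hadamard_all_def wf_gate_def)
    next
      assume "g \<in> set Comp"
      then obtain k c where kc: "k < m" "c \<in> set (cs k)" "g = CNOT c (n+k)" by (auto simp: Comp_def)
      then have "c < n" using csb by blast
      then show ?thesis using kc by (auto simp: wf_gate_def)
    qed
  qed
  have layer: "is_layer (n + m) Tl"
  proof -
    have q: "gate_qubits (if p then T q else Tdg q) = [q]" for p q by auto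
    have "concat (map gate_qubits Tl) = map (\<lambda>k. n + k) [0..<m]"
      by (simp add: Tl_def q o_def)
    then show ?thesis by (auto simp: is_layer_def Tl_def wf_gate_def distinct_map)
  qed
  have midrun: "run (Comp @ Tl @ Comp) (c @ Oz) = c @ Oz \<and>
       phr (Comp @ Tl @ Comp) (c @ Oz) = prod_list (map (\<lambda>g. cph g c) gates)" if c: "c \<in> bits n" for c
  proof -
    have lc: "length c = n" using c by (simp add: bits_def)
    have rc: "run Comp z = xr n cs [0..<m] z" if "length z = n + m" for z
      unfolding Comp_def using that csb by (intro run_comp) auto
    define W where "W = map (\<lambda>k. par c (cs k)) [0..<m]"
    have r1: "run Comp (c @ Oz) = c @ W"
      using rc[of "c @ Oz"] xr_app[OF lc, of Oz m cs] csb lc by (simp add: Oz_def W_def)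
    have r2: "run Comp (c @ W) = c @ Oz"
    proof -
      have "run Comp (c @ W) = c @ map (\<lambda>k. W!k \<noteq> par c (cs k)) [0..<m]"
        using rc[of "c @ W"] xr_app[OF lc, of W m cs] csb lc by (simp add: W_def)
      also have "map (\<lambda>k. W!k \<noteq> par c (cs k)) [0..<m] = Oz"
        by (rule nth_equalityI) (simp_all add: W_def Oz_def)
      finally show ?thesis .
    qed
    have rT: "run Tl z = z" for z using Tlid by (rule run_id)
    have pT: "phr Tl (c @ W) = prod_list (map (\<lambda>g. cph g c) gates)"
    proof -
      have "phr Tl (c @ W) = prod_list (map (\<lambda>g. cph g (c @ W)) Tl)" using Tlid by (rule phr_id)
      also have "... = prod_list (map (\<lambda>k. w8 ^ ex (snd (srcs ! k)) (par c (fst (srcs ! k)))) [0..<m])"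
        unfolding Tl_def map_map
        by (intro arg_cong[where f=prod_list] map_cong refl)
           (simp add: cph_Tsel lc nth_append W_def cs_def o_def del: cph.simps)
      also have "... = prod_list (map (\<lambda>x. w8 ^ ex (snd x) (par c (fst x))) srcs)"
        unfolding m_def by (rule map_T_eq)
      also have "... = prod_list (map (\<lambda>g. prod_list (map (\<lambda>x. w8 ^ ex (snd x) (par c (fst x))) (gate_anc g))) gates)"
        by (simp add: srcs_def map_concat prod_list_concat o_def)
      also have "... = prod_list (map (\<lambda>g. cph g c) gates)"
        using gd gate_anc_phase by (intro arg_cong[where f=prod_list] map_cong) auto
      finally show ?thesis .
    qed
    show ?thesis
      using r1 r2 rT pT phr_cnot[OF CompC]
      by (simp add: run_append phr_append)
  qed
  have gates_diag: "circ_mat n gates a c = (if a = c then prod_list (map (\<lambda>g. cph g c) gates) else 0)"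
    if "c \<in> bits n" for a c
  proof -
    have nh: "\<forall>g\<in>set gates. \<not> isH g" using gd diag_notH by blast
    have idg: "\<forall>g\<in>set gates. \<forall>z. cfun g z = z" using gd diag_cfun by blast
    have "run gates c = c" using run_id[OF idg] .
    moreover have "phr gates c = prod_list (map (\<lambda>g. cph g c) gates)" using phr_id[OF idg] .
    ultimately show ?thesis using circ_classical[OF nh that, of a] by simp
  qed
  have mid: "\<forall>a\<in>bits n. \<forall>b\<in>bits m. \<forall>c\<in>bits n. circ_mat (n+m) (Comp @ Tl @ Comp) (a @ b) (c @ replicate m False) =
              (if b = replicate m False then circ_mat n gates a c else 0)"
  proof (intro ballI)
    fix a b c assume a: "a \<in> bits n" and b: "b \<in> bits m" and c: "c \<in> bits n"
    have nh: "\<forall>g\<in>set (Comp @ Tl @ Comp). \<not> isH g" using CompC TlT T_notH by fastforce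
    have cO: "c @ Oz \<in> bits (n+m)" using c by (simp add: bits_def Oz_def)
    have eq: "(a @ b = c @ Oz) = (a = c \<and> b = Oz)" using a c by (simp add: bits_def)
    show "circ_mat (n+m) (Comp @ Tl @ Comp) (a @ b) (c @ replicate m False) =
              (if b = replicate m False then circ_mat n gates a c else 0)"
      using circ_classical[OF nh cO, of "a @ b"] midrun[OF c] eq gates_diag[OF c, of a]
      unfolding Oz_def by auto
  qed
  have main: "\<forall>x\<in>bits n. \<forall>z\<in>bits n. \<forall>y\<in>bits m.
           circ_mat (n + m) ((Hn @ Comp) @ Tl @ (Comp @ Hn)) (x @ y) (z @ replicate m False) =
           (if y = replicate m False then circ_mat n (iqp3_circuit n layers) x z else 0)"
  proof (intro ballI)
    fix x z y assume x: "x \<in> bits n" and z: "z \<in> bits n" and y: "y \<in> bits m"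
    have e1: "(Hn @ Comp) @ Tl @ (Comp @ Hn) = Hn @ (Comp @ Tl @ Comp) @ Hn" by simp
    have e2: "iqp3_circuit n layers = Hn @ gates @ Hn" by (simp only: iqp3_circuit_def Hn_def gates_def)
    show "circ_mat (n + m) ((Hn @ Comp) @ Tl @ (Comp @ Hn)) (x @ y) (z @ replicate m False) =
           (if y = replicate m False then circ_mat n (iqp3_circuit n layers) x z else 0)"
      unfolding e1 e2 by (rule sandwich[OF HnH mid x z y])
  qed
  show "\<exists>m C1 Tl C2.
        m \<le> 7 * n * d \<and>
        (\<forall>g\<in>set (C1 @ C2). is_clifford_gate g \<and> wf_gate (n + m) g) \<and>
        is_layer (n + m) Tl \<and> (\<forall>g\<in>set Tl. is_T_gate g) \<and>
        (\<forall>x\<in>bits n. \<forall>z\<in>bits n. \<forall>y\<in>bits m.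
           circ_mat (n + m) (C1 @ Tl @ C2) (x @ y) (z @ replicate m False) =
           (if y = replicate m False then circ_mat n (iqp3_circuit n layers) x z else 0))"
    apply (rule exI[of _ m], rule exI[of _ "Hn @ Comp"], rule exI[of _ Tl], rule exI[of _ "Comp @ Hn"])
    apply (intro conjI)
        apply (rule mb)
       apply (rule cliff)
      apply (rule layer)
     apply (rule TlT)
    apply (rule main)
    done
qed

end
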